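(* In the setting below, $\kappa_0=\rho$, and for every $\alpha\in\mathbb{N}^N$ with $|\alpha|\ge1$, \[ |\kappa_\alpha|\le(|\alpha|+1)^{|\alpha|}\lambda^{|\alpha|}\rho^{|V(\alpha)|}. \]
   Context: Let $n\ge1$, $\lambda\ge0$, $\rho\in(0,1)$, $v\in\{0,1\}^n$ with i.i.d. $\mathrm{Bernoulli}(\rho)$ entries, $N=n(n+1)/2$ indexed by pairs $(i,j)$ with $1\le i\le j\le n$, $X_{ij}=\lambda v_iv_j$, and $x=v_1$. An index $\alpha=(\alpha_{ij})_{i\le j}\in\mathbb{N}^N$ is viewed as a multigraph on vertex set $[n]$ (self-loops allowed) with $\alpha_{ij}$ edges between $i$ and $j$; $|\alpha|$ is its number of edges and $V(\alpha)$ the set of vertices spanned by its edges. $\kappa_\alpha$ is defined recursively by $\kappa_\alpha=\mathbb{E}[xX^\alpha]-\sum_{0\le\beta\lneq\alpha}\kappa_\beta\binom{\alpha}{\beta}\mathbb{E}[X^{\alpha-\beta}]$, with multi-index notation $X^\alpha=\prod X_{ij}^{\alpha_{ij}}$, $\binom{\alpha}{\beta}=\prod\binom{\alpha_{ij}}{\beta_{ij}}$, $\beta\le\alpha$ entrywise, $\beta\lneq\alpha$ meaning $\beta\le\alpha$, $\beta\ne\alpha$. *)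

theory Defs
  imports "HOL-Probability.Probability"
begin

definition idx :: "nat \<Rightarrow> (nat \<times> nat) set" where
  "idx n = {(i, j). 1 \<le> i \<and> i \<le> j \<and> j \<le> n}"

definition vdist :: "nat \<Rightarrow> real \<Rightarrow> (nat \<Rightarrow> bool) pmf" where
  "vdist n rho = Pi_pmf {1..n} False (\<lambda>_. bernoulli_pmf rho)"

definition Ev :: "nat \<Rightarrow> real \<Rightarrow> ((nat \<Rightarrow> bool) \<Rightarrow> real) \<Rightarrow> real" where
  "Ev n rho f = measure_pmf.expectation (vdist n rho) f"

definition Xv :: "real \<Rightarrow> (nat \<Rightarrow> bool) \<Rightarrow> nat \<times> nat \<Rightarrow> real" where
  "Xv lam v p = lam * of_bool (v (fst p)) * of_bool (v (snd p))"

definition xv :: "(nat \<Rightarrow> bool) \<Rightarrow> real" where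
  "xv v = of_bool (v 1)"

definition Xmon :: "nat \<Rightarrow> real \<Rightarrow> (nat \<times> nat \<Rightarrow> nat) \<Rightarrow> (nat \<Rightarrow> bool) \<Rightarrow> real" where
  "Xmon n lam \<alpha> v = (\<Prod>p\<in>idx n. Xv lam v p ^ \<alpha> p)"

definition mbinom :: "nat \<Rightarrow> (nat \<times> nat \<Rightarrow> nat) \<Rightarrow> (nat \<times> nat \<Rightarrow> nat) \<Rightarrow> nat" where
  "mbinom n \<alpha> \<beta> = (\<Prod>p\<in>idx n. \<alpha> p choose \<beta> p)"

text \<open>Multi-indices in N^N: functions vanishing outside idx n.\<close>
definition is_mindex :: "nat \<Rightarrow> (nat \<times> nat \<Rightarrow> nat) \<Rightarrow> bool" where
  "is_mindex n \<alpha> \<longleftrightarrow> (\<forall>p. p \<notin> idx n \<longrightarrow> \<alpha> p = 0)"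

definition msize :: "nat \<Rightarrow> (nat \<times> nat \<Rightarrow> nat) \<Rightarrow> nat" where
  "msize n \<alpha> = (\<Sum>p\<in>idx n. \<alpha> p)"

definition Vset :: "nat \<Rightarrow> (nat \<times> nat \<Rightarrow> nat) \<Rightarrow> nat set" where
  "Vset n \<alpha> = {k. \<exists>p\<in>idx n. \<alpha> p > 0 \<and> (k = fst p \<or> k = snd p)}"

lemma finite_idx: "finite (idx n)"
proof -
  have "idx n \<subseteq> {1..n} \<times> {1..n}" by (auto simp: idx_def)
  thus ?thesis by (rule finite_subset) auto
qed

function kappa :: "nat \<Rightarrow> real \<Rightarrow> real \<Rightarrow> (nat \<times> nat \<Rightarrow> nat) \<Rightarrow> real" where
  "kappa n lam rho \<alpha> =
     (if is_mindex n \<alpha> then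
        Ev n rho (\<lambda>v. xv v * Xmon n lam \<alpha> v)
        - (\<Sum>\<beta>\<in>{\<beta>. (\<forall>p. \<beta> p \<le> \<alpha> p) \<and> \<beta> \<noteq> \<alpha>}.
             kappa n lam rho \<beta> * real (mbinom n \<alpha> \<beta>)
             * Ev n rho (Xmon n lam (\<lambda>p. \<alpha> p - \<beta> p)))
      else 0)"
  by auto
termination
proof (relation "Wellfounded.measure (\<lambda>(n, lam, rho, \<alpha>). msize n \<alpha>)")
  show "wf (Wellfounded.measure (\<lambda>(n, lam, rho, \<alpha>). msize n \<alpha>))" by simp
next
  fix n lam rho \<alpha> \<beta>
  assume m: "is_mindex n \<alpha>" and b: "\<beta> \<in> {\<beta>. (\<forall>p. \<beta> p \<le> \<alpha> p) \<and> \<beta> \<noteq> \<alpha>}"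
  have "\<beta> \<noteq> \<alpha>" using b by simp
  then obtain q where q: "\<beta> q \<noteq> \<alpha> q" by (meson ext)
  have "\<beta> q \<le> \<alpha> q" using b by blast
  with q have lt: "\<beta> q < \<alpha> q" by simp
  hence "q \<in> idx n" using m unfolding is_mindex_def by (metis less_zeroE)
  hence "(\<Sum>p\<in>idx n. \<beta> p) < (\<Sum>p\<in>idx n. \<alpha> p)"
    using b lt finite_idx by (intro sum_strict_mono_ex1) blast+
  thus "((n, lam, rho, \<beta>), n, lam, rho, \<alpha>) \<in> Wellfounded.measure (\<lambda>(n, lam, rho, \<alpha>). msize n \<alpha>)"
    by (simp add: msize_def)
qed

declare kappa.simps [simp del]

end

theory Submission
  imports Defs
begin

lemma Xv_pow: "Xv lam v p ^ k = lam ^ k * of_bool (k = 0 \<or> (v (fst p) \<and> v (snd p)))"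
  by (cases k) (auto simp: Xv_def power_mult_distrib)

lemma prod_of_bool_real: "finite A \<Longrightarrow> (\<Prod>x\<in>A. (of_bool (P x)::real)) = of_bool (\<forall>x\<in>A. P x)"
  by (induction A rule: finite_induct) auto

lemma Vset_sub: "Vset n \<gamma> \<subseteq> {1..n}"
  by (auto simp: Vset_def idx_def)

lemma Xmon_eq: "Xmon n lam \<gamma> v = lam ^ msize n \<gamma> * of_bool (\<forall>k\<in>Vset n \<gamma>. v k)"
proof -
  have "Xmon n lam \<gamma> v = (\<Prod>p\<in>idx n. lam ^ \<gamma> p) * (\<Prod>p\<in>idx n. of_bool (\<gamma> p = 0 \<or> (v (fst p) \<and> v (snd p))))"
    unfolding Xmon_def Xv_pow prod.distrib by simp
  also have "\<dots> = lam ^ msize n \<gamma> * of_bool (\<forall>p\<in>idx n. \<gamma> p = 0 \<or> (v (fst p) \<and> v (snd p)))"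
    unfolding msize_def power_sum prod_of_bool_real[OF finite_idx] ..
  also have "(\<forall>p\<in>idx n. \<gamma> p = 0 \<or> (v (fst p) \<and> v (snd p))) = (\<forall>k\<in>Vset n \<gamma>. v k)"
    by (auto simp: Vset_def)
  finally show ?thesis .
qed

lemma Ev_all:
  assumes "S \<subseteq> {1..n}" "0 \<le> rho" "rho \<le> 1"
  shows "Ev n rho (\<lambda>v. of_bool (\<forall>k\<in>S. v k)) = rho ^ card S"
proof -
  have eq: "(\<lambda>v. (of_bool (\<forall>k\<in>S. v k)::real)) = (\<lambda>v. \<Prod>k\<in>{1..n}. (\<lambda>k b. of_bool (k \<in> S \<longrightarrow> b)) k (v k))"
    using assms(1) unfolding prod_of_bool_real[OF finite_atLeastAtMost] by (intro ext) (auto intro!: arg_cong[where f=of_bool])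
  have "Ev n rho (\<lambda>v. of_bool (\<forall>k\<in>S. v k)) = (\<Prod>k\<in>{1..n}. measure_pmf.expectation (bernoulli_pmf rho) (\<lambda>b. of_bool (k \<in> S \<longrightarrow> b)))"
    unfolding Ev_def vdist_def eq
    by (rule expectation_prod_Pi_pmf) (auto intro!: integrable_measure_pmf_finite)
  also have "\<dots> = (\<Prod>k\<in>{1..n}. if k \<in> S then rho else 1)"
    using assms by (intro prod.cong) auto
  also have "\<dots> = (\<Prod>k\<in>S. rho)"
    using assms(1) by (subst prod.If_cases) (auto simp: Int_absorb1 Int_absorb2 Int_commute)
  finally show ?thesis by simp
qed

lemma Ev_Xmon:
  assumes "0 \<le> rho" "rho \<le> 1"
  shows "Ev n rho (Xmon n lam \<gamma>) = lam ^ msize n \<gamma> * rho ^ card (Vset n \<gamma>)"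
proof -
  have "Ev n rho (Xmon n lam \<gamma>) = lam ^ msize n \<gamma> * Ev n rho (\<lambda>v. of_bool (\<forall>k\<in>Vset n \<gamma>. v k))"
    unfolding Ev_def Xmon_eq by simp
  thus ?thesis using Ev_all[OF Vset_sub assms] by simp
qed

lemma Ev_xXmon:
  assumes "0 \<le> rho" "rho \<le> 1" "1 \<le> n"
  shows "Ev n rho (\<lambda>v. xv v * Xmon n lam \<gamma> v) = lam ^ msize n \<gamma> * rho ^ card (insert 1 (Vset n \<gamma>))"
proof -
  have "(\<lambda>v. xv v * Xmon n lam \<gamma> v) = (\<lambda>v. lam ^ msize n \<gamma> * of_bool (\<forall>k\<in>insert 1 (Vset n \<gamma>). v k))"
    by (auto simp: xv_def Xmon_eq)
  hence e1: "Ev n rho (\<lambda>v. xv v * Xmon n lam \<gamma> v) = lam ^ msize n \<gamma> * Ev n rho (\<lambda>v. of_bool (\<forall>k\<in>insert 1 (Vset n \<gamma>). v k))"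
    unfolding Ev_def by simp
  have "insert 1 (Vset n \<gamma>) \<subseteq> {1..n}" using Vset_sub assms(3) by auto
  note e2 = Ev_all[OF this assms(1,2)]
  show ?thesis unfolding e1 e2 ..
qed

lemma sum_B_prod:
  fixes f :: "nat \<times> nat \<Rightarrow> nat \<Rightarrow> real"
  assumes m: "is_mindex n \<alpha>"
  shows "(\<Sum>\<beta>\<in>{\<beta>. \<forall>p. \<beta> p \<le> \<alpha> p}. \<Prod>p\<in>idx n. f p (\<beta> p)) = (\<Prod>p\<in>idx n. \<Sum>b\<le>\<alpha> p. f p b)"
proof -
  have "(\<Prod>p\<in>idx n. \<Sum>b\<le>\<alpha> p. f p b) = (\<Sum>g\<in>PiE (idx n) (\<lambda>p. {..\<alpha> p}). \<Prod>p\<in>idx n. f p (g p))"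
    by (rule prod_sum_PiE) (auto simp: finite_idx)
  also have "\<dots> = (\<Sum>\<beta>\<in>{\<beta>. \<forall>p. \<beta> p \<le> \<alpha> p}. \<Prod>p\<in>idx n. f p (\<beta> p))"
  proof (rule sum.reindex_bij_witness[where i="\<lambda>\<beta>. restrict \<beta> (idx n)" and j="\<lambda>g p. if p \<in> idx n then g p else 0"])
    fix g assume g: "g \<in> PiE (idx n) (\<lambda>p. {..\<alpha> p})"
    show "restrict (\<lambda>p. if p \<in> idx n then g p else 0) (idx n) = g"
      using g by (auto simp: restrict_def PiE_def extensional_def)
    show "(\<lambda>p. if p \<in> idx n then g p else 0) \<in> {\<beta>. \<forall>p. \<beta> p \<le> \<alpha> p}"
      using g by auto
    show "(\<Prod>p\<in>idx n. f p (if p \<in> idx n then g p else 0)) = (\<Prod>p\<in>idx n. f p (g p))"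
      by (intro prod.cong) auto
  next
    fix \<beta> assume b: "\<beta> \<in> {\<beta>. \<forall>p. \<beta> p \<le> \<alpha> p}"
    show "(\<lambda>p. if p \<in> idx n then restrict \<beta> (idx n) p else 0) = \<beta>"
    proof
      fix p show "(if p \<in> idx n then restrict \<beta> (idx n) p else 0) = \<beta> p"
      proof (cases "p \<in> idx n")
        case False
        hence "\<alpha> p = 0" using m unfolding is_mindex_def by blast
        moreover have "\<beta> p \<le> \<alpha> p" using b unfolding mem_Collect_eq by blast
        ultimately show ?thesis using False by simp
      qed simp
    qed
    show "restrict \<beta> (idx n) \<in> PiE (idx n) (\<lambda>p. {..\<alpha> p})"
      using b by auto
  qed
  finally show ?thesis by simp
qed

lemma finite_B:
  assumes m: "is_mindex n \<alpha>"
  shows "finite {\<beta>. \<forall>p. \<beta> p \<le> \<alpha> p}"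
proof -
  have "{\<beta>. \<forall>p. \<beta> p \<le> \<alpha> p} \<subseteq> (\<lambda>g p. if p \<in> idx n then g p else 0) ` PiE (idx n) (\<lambda>p. {..\<alpha> p})"
  proof
    fix \<beta> assume b: "\<beta> \<in> {\<beta>. \<forall>p. \<beta> p \<le> \<alpha> p}"
    have "\<beta> = (\<lambda>p. if p \<in> idx n then restrict \<beta> (idx n) p else 0)"
    proof
      fix p show "\<beta> p = (if p \<in> idx n then restrict \<beta> (idx n) p else 0)"
      proof (cases "p \<in> idx n")
        case False
        hence "\<alpha> p = 0" using m unfolding is_mindex_def by blast
        moreover have "\<beta> p \<le> \<alpha> p" using b unfolding mem_Collect_eq by blast
        ultimately show ?thesis using False by simp
      qed simp
    qed
    moreover have "restrict \<beta> (idx n) \<in> PiE (idx n) (\<lambda>p. {..\<alpha> p})" using b by auto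
    ultimately show "\<beta> \<in> (\<lambda>g p. if p \<in> idx n then g p else 0) ` PiE (idx n) (\<lambda>p. {..\<alpha> p})"
      by blast
  qed
  moreover have "finite (PiE (idx n) (\<lambda>p. {..\<alpha> p}))" by (intro finite_PiE finite_idx) auto
  ultimately show ?thesis by (meson finite_imageI finite_subset)
qed

lemma binom_sum:
  fixes c :: real
  assumes m: "is_mindex n \<alpha>"
  shows "(\<Sum>\<beta>\<in>{\<beta>. \<forall>p. \<beta> p \<le> \<alpha> p}. real (mbinom n \<alpha> \<beta>) * c ^ msize n \<beta>) = (c + 1) ^ msize n \<alpha>"
proof -
  have "(\<Sum>\<beta>\<in>{\<beta>. \<forall>p. \<beta> p \<le> \<alpha> p}. real (mbinom n \<alpha> \<beta>) * c ^ msize n \<beta>)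
      = (\<Sum>\<beta>\<in>{\<beta>. \<forall>p. \<beta> p \<le> \<alpha> p}. \<Prod>p\<in>idx n. real (\<alpha> p choose \<beta> p) * c ^ \<beta> p)"
    by (simp add: mbinom_def msize_def power_sum prod.distrib)
  also have "\<dots> = (\<Prod>p\<in>idx n. \<Sum>b\<le>\<alpha> p. real (\<alpha> p choose b) * c ^ b)"
    by (rule sum_B_prod[OF m])
  also have "\<dots> = (\<Prod>p\<in>idx n. (c + 1) ^ \<alpha> p)"
    by (intro prod.cong refl) (simp add: binomial_ring)
  also have "\<dots> = (c + 1) ^ msize n \<alpha>" by (simp add: msize_def power_sum)
  finally show ?thesis .
qed

lemma msize_diff:
  assumes "\<forall>p. \<beta> p \<le> \<alpha> p"
  shows "msize n (\<lambda>p. \<alpha> p - \<beta> p) = msize n \<alpha> - msize n \<beta>" "msize n \<beta> \<le> msize n \<alpha>"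
  unfolding msize_def
   apply (rule sum_subtractf_nat) using assms apply blast
  apply (rule sum_mono) using assms by blast

lemma Vset_un: "Vset n \<alpha> \<subseteq> Vset n \<beta> \<union> Vset n (\<lambda>p. \<alpha> p - \<beta> p)"
proof
  fix k assume "k \<in> Vset n \<alpha>"
  then obtain p where p: "p \<in> idx n" "\<alpha> p > 0" "k = fst p \<or> k = snd p"
    unfolding Vset_def by blast
  show "k \<in> Vset n \<beta> \<union> Vset n (\<lambda>p. \<alpha> p - \<beta> p)"
  proof (cases "\<beta> p > 0")
    case True thus ?thesis using p unfolding Vset_def by blast
  next
    case False hence "\<alpha> p - \<beta> p > 0" using p(2) by simp
    thus ?thesis using p unfolding Vset_def by blast
  qed
qed

lemma finite_Vset: "finite (Vset n \<alpha>)"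
  using Vset_sub by (rule finite_subset) simp

lemma mbinom_self: "mbinom n \<alpha> \<alpha> = 1"
  by (simp add: mbinom_def)

lemma main_bound:
  assumes n: "1 \<le> n" and lam: "0 \<le> lam" and r0: "0 < rho" and r1: "rho < 1"
  shows "is_mindex n \<alpha> \<Longrightarrow> \<bar>kappa n lam rho \<alpha>\<bar>
     \<le> real (msize n \<alpha> + 1) ^ msize n \<alpha> * lam ^ msize n \<alpha> * rho ^ card (Vset n \<alpha>)"
proof (induction "msize n \<alpha>" arbitrary: \<alpha> rule: less_induct)
  case less
  define m where "m = msize n \<alpha>"
  define S where "S = {\<beta>. (\<forall>p. \<beta> p \<le> \<alpha> p) \<and> \<beta> \<noteq> \<alpha>}"
  define B where "B = {\<beta>. \<forall>p. \<beta> p \<le> \<alpha> p}"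
  define V where "V = card (Vset n \<alpha>)"
  define T where "T = (\<lambda>\<beta>. kappa n lam rho \<beta> * real (mbinom n \<alpha> \<beta>) * Ev n rho (Xmon n lam (\<lambda>p. \<alpha> p - \<beta> p)))"
  have rr: "0 \<le> rho" "rho \<le> 1" using r0 r1 by auto
  have k: "kappa n lam rho \<alpha> = lam ^ m * rho ^ card (insert 1 (Vset n \<alpha>)) - (\<Sum>\<beta>\<in>S. T \<beta>)"
  proof -
    have ex: "Ev n rho (\<lambda>v. xv v * Xmon n lam \<alpha> v) = lam ^ m * rho ^ card (insert 1 (Vset n \<alpha>))"
      unfolding m_def by (rule Ev_xXmon[OF rr n])
    show ?thesis by (subst kappa.simps, subst if_P[OF less.prems], simp only: ex S_def T_def)
  qed
  have fB: "finite B" unfolding B_def by (rule finite_B[OF less.prems])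
  have BS: "B = insert \<alpha> S" "\<alpha> \<notin> S" unfolding B_def S_def by blast+
  have fS: "finite S" using fB BS by simp
  have t1: "rho ^ card (insert 1 (Vset n \<alpha>)) \<le> rho ^ V"
    unfolding V_def by (intro power_decreasing card_mono) (auto simp: finite_Vset rr)
  have tb: "\<bar>T \<beta>\<bar> \<le> real (mbinom n \<alpha> \<beta>) * real m ^ msize n \<beta> * (lam ^ m * rho ^ V)" if "\<beta> \<in> S" for \<beta>
  proof -
    have le: "\<forall>p. \<beta> p \<le> \<alpha> p" using that unfolding S_def mem_Collect_eq by (rule conjunct1)
    have ne: "\<beta> \<noteq> \<alpha>" using that unfolding S_def mem_Collect_eq by (rule conjunct2)
    have mb: "is_mindex n \<beta>" unfolding is_mindex_def
    proof (intro allI impI)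
      fix p assume "p \<notin> idx n"
      hence "\<alpha> p = 0" using less.prems unfolding is_mindex_def by blast
      thus "\<beta> p = 0" using le[rule_format, of p] by simp
    qed
    obtain q where q: "\<beta> q \<noteq> \<alpha> q" using ne by (meson ext)
    have lt0: "\<beta> q < \<alpha> q" using q le[rule_format, of q] by simp
    have "q \<in> idx n"
    proof (rule ccontr)
      assume "q \<notin> idx n"
      hence "\<alpha> q = 0" using less.prems unfolding is_mindex_def by blast
      thus False using lt0 by simp
    qed
    hence lt: "msize n \<beta> < m"
      unfolding m_def msize_def using le lt0 finite_idx by (intro sum_strict_mono_ex1) blast+
    define a where "a = msize n \<beta>"
    define V1 where "V1 = card (Vset n \<beta>)"
    define V2 where "V2 = card (Vset n (\<lambda>p. \<alpha> p - \<beta> p))"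
    define A where "A = real (a + 1) ^ a"
    have IH: "\<bar>kappa n lam rho \<beta>\<bar> \<le> A * lam ^ a * rho ^ V1"
      unfolding A_def a_def V1_def by (intro less.hyps mb) (use lt in \<open>simp add: m_def\<close>)
    have E: "Ev n rho (Xmon n lam (\<lambda>p. \<alpha> p - \<beta> p)) = lam ^ (m - a) * rho ^ V2"
      unfolding Ev_Xmon[OF rr] msize_diff(1)[OF le] a_def V2_def m_def by (rule refl)
    have VV: "V \<le> V1 + V2"
      unfolding V_def V1_def V2_def
      by (rule order_trans[OF card_mono[OF finite_UnI[OF finite_Vset finite_Vset] Vset_un] card_Un_le])
    have pv: "rho ^ V1 * rho ^ V2 \<le> rho ^ V"
      unfolding power_add[symmetric] by (rule power_decreasing[OF VV rr])
    have pl: "lam ^ a * lam ^ (m - a) = lam ^ m"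
      unfolding power_add[symmetric] using lt a_def by simp
    have pm: "A \<le> real m ^ a"
    proof -
      have "a + 1 \<le> m" using lt a_def by simp
      hence "real (a + 1) \<le> real m" by (rule of_nat_mono)
      thus ?thesis unfolding A_def by (rule power_mono) simp
    qed
    have nn: "0 \<le> lam ^ (m - a) * rho ^ V2" using lam rr by simp
    have "\<bar>T \<beta>\<bar> = \<bar>kappa n lam rho \<beta>\<bar> * (real (mbinom n \<alpha> \<beta>) * (lam ^ (m - a) * rho ^ V2))"
    proof -
      have "\<bar>lam ^ (m - a)\<bar> = lam ^ (m - a)" "\<bar>rho ^ V2\<bar> = rho ^ V2" using lam rr by simp_all
      thus ?thesis unfolding T_def E abs_mult abs_of_nat by (simp only: mult.assoc)
    qed
    also have "\<dots> \<le> (A * lam ^ a * rho ^ V1) * (real (mbinom n \<alpha> \<beta>) * (lam ^ (m - a) * rho ^ V2))"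
      by (rule mult_right_mono[OF IH]) (use nn in simp)
    also have "\<dots> = real (mbinom n \<alpha> \<beta>) * A * (lam ^ a * lam ^ (m - a)) * (rho ^ V1 * rho ^ V2)"
      by (simp add: mult_ac)
    also have "\<dots> \<le> real (mbinom n \<alpha> \<beta>) * real m ^ a * lam ^ m * rho ^ V"
      unfolding pl
      by (intro mult_mono mult_left_mono pm pv) (use lam rr in \<open>auto simp: A_def\<close>)
    finally show ?thesis by (simp add: a_def mult_ac)
  qed
  have sumS: "(\<Sum>\<beta>\<in>S. real (mbinom n \<alpha> \<beta>) * real m ^ msize n \<beta>) = (real m + 1) ^ m - real m ^ m"
  proof -
    have "(\<Sum>\<beta>\<in>B. real (mbinom n \<alpha> \<beta>) * real m ^ msize n \<beta>) = (real m + 1) ^ m"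
      unfolding B_def m_def by (rule binom_sum[OF less.prems])
    moreover have "(\<Sum>\<beta>\<in>B. real (mbinom n \<alpha> \<beta>) * real m ^ msize n \<beta>)
        = real m ^ m + (\<Sum>\<beta>\<in>S. real (mbinom n \<alpha> \<beta>) * real m ^ msize n \<beta>)"
      unfolding BS(1) using fS BS(2) by (simp add: mbinom_self m_def)
    ultimately show ?thesis by simp
  qed
  define L where "L = lam ^ m * rho ^ V"
  define P where "P = (real m + 1) ^ m"
  define Q where "Q = real m ^ m"
  have L0: "0 \<le> L" unfolding L_def using lam rr by simp
  have h1: "\<bar>kappa n lam rho \<alpha>\<bar> \<le> \<bar>lam ^ m * rho ^ card (insert 1 (Vset n \<alpha>))\<bar> + \<bar>\<Sum>\<beta>\<in>S. T \<beta>\<bar>"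
    unfolding k by (rule abs_triangle_ineq4)
  have h2: "\<bar>lam ^ m * rho ^ card (insert 1 (Vset n \<alpha>))\<bar> \<le> L"
    unfolding L_def using t1 lam rr by (simp add: abs_mult mult_left_mono)
  have h3a: "\<bar>\<Sum>\<beta>\<in>S. T \<beta>\<bar> \<le> (\<Sum>\<beta>\<in>S. \<bar>T \<beta>\<bar>)" by (rule sum_abs)
  have h3b: "(\<Sum>\<beta>\<in>S. \<bar>T \<beta>\<bar>) \<le> (\<Sum>\<beta>\<in>S. real (mbinom n \<alpha> \<beta>) * real m ^ msize n \<beta> * (lam ^ m * rho ^ V))"
    by (rule sum_mono) (rule tb)
  have h3c: "(\<Sum>\<beta>\<in>S. real (mbinom n \<alpha> \<beta>) * real m ^ msize n \<beta> * (lam ^ m * rho ^ V)) = (P - Q) * L"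
    unfolding sum_distrib_right[symmetric] sumS P_def Q_def L_def ..
  have h5: "(P - Q) * L = P * L - Q * L" by (rule left_diff_distrib)
  have Q1: "1 \<le> Q" unfolding Q_def
  proof (cases m)
    case (Suc k) thus "1 \<le> real m ^ m" by (intro one_le_power) simp
  qed simp
  have h6: "1 * L \<le> Q * L" by (rule mult_right_mono[OF Q1 L0])
  have fin: "\<bar>kappa n lam rho \<alpha>\<bar> \<le> P * L" using h1 h2 h3a h3b h3c h5 h6 by linarith
  show ?case using fin unfolding P_def L_def m_def V_def by (simp only: of_nat_add of_nat_1 mult.assoc)
qed

theorem mainTheorem6:
  fixes n :: nat and lam rho :: real
  assumes "n \<ge> 1" and "lam \<ge> 0" and "0 < rho" and "rho < 1"
  shows "kappa n lam rho (\<lambda>_. 0) = rho \<and>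
    (\<forall>\<alpha>. is_mindex n \<alpha> \<and> msize n \<alpha> \<ge> 1 \<longrightarrow>
       \<bar>kappa n lam rho \<alpha>\<bar>
         \<le> real (msize n \<alpha> + 1) ^ msize n \<alpha> * lam ^ msize n \<alpha> * rho ^ card (Vset n \<alpha>))"
proof
  have m0: "is_mindex n (\<lambda>_. 0)" by (simp add: is_mindex_def)
  have e: "{\<beta>. (\<forall>p. \<beta> p \<le> (0::nat)) \<and> \<beta> \<noteq> (\<lambda>_. 0)} = {}" by auto
  have "kappa n lam rho (\<lambda>_. 0) = Ev n rho (\<lambda>v. xv v * Xmon n lam (\<lambda>_. 0) v)"
    by (subst kappa.simps, subst if_P[OF m0], simp only: e sum.empty diff_zero)
  also have "\<dots> = rho" using assms
    by (subst Ev_xXmon) (auto simp: msize_def Vset_def)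
  finally show "kappa n lam rho (\<lambda>_. 0) = rho" .
  show "\<forall>\<alpha>. is_mindex n \<alpha> \<and> msize n \<alpha> \<ge> 1 \<longrightarrow>
       \<bar>kappa n lam rho \<alpha>\<bar>
         \<le> real (msize n \<alpha> + 1) ^ msize n \<alpha> * lam ^ msize n \<alpha> * rho ^ card (Vset n \<alpha>)"
  proof (intro allI impI)
    fix \<alpha> assume h: "is_mindex n \<alpha> \<and> 1 \<le> msize n \<alpha>"
    show "\<bar>kappa n lam rho \<alpha>\<bar>
         \<le> real (msize n \<alpha> + 1) ^ msize n \<alpha> * lam ^ msize n \<alpha> * rho ^ card (Vset n \<alpha>)"
      by (rule main_bound[OF assms conjunct1[OF h]])
  qed
qed

end
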